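(* Let $\mathcal{B}=\{B_j:j\in\mathbb{N}_0\}$ be a correlation basis, let $g,h\in\mathcal{L}^2([0,1])$ be standardized, and let $X,Y$ be random variables with continuous distribution functions $F_X,F_Y$. Then $$\rho_{\{g,h\}}(X,Y)=\sum_{j=1}^\infty\sum_{k=1}^\infty\alpha_j(g)\alpha_k(h)\rho^B_{jk}(X,Y),$$ where $\alpha_j(\psi)=\int_0^1\psi(u)B_j(u)\,\mathrm{d}u$ for $\psi\in\mathcal{L}^2([0,1])$, and $\sum_{j=1}^\infty\alpha_j(g)^2=\sum_{j=1}^\infty\alpha_j(h)^2=1$.
   Context: A correlation basis is a complete orthonormal system $\{B_j:j\in\mathbb{N}_0\}$ of $\mathcal{L}^2([0,1])$ (Lebesgue measure) with $B_0\equiv1$. $\psi$ is standardized if $\int_0^1\psi=0$ and $\int_0^1\psi^2=1$. $\rho_{\{g,h\}}(X,Y)=\rho(g(F_X(X)),h(F_Y(Y)))$ with $\rho$ Pearson correlation, and $\rho^B_{jk}(X,Y)=\rho_{\{B_j,B_k\}}(X,Y)$. *)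

theory Defs
  imports "HOL-Probability.Probability"
begin

definition L2_01 :: "(real \<Rightarrow> real) \<Rightarrow> bool" where
  "L2_01 f \<longleftrightarrow> f \<in> borel_measurable borel \<and> set_integrable lborel {0..1} (\<lambda>u. (f u)\<^sup>2)"

definition ip01 :: "(real \<Rightarrow> real) \<Rightarrow> (real \<Rightarrow> real) \<Rightarrow> real" where
  "ip01 f g = (LINT u:{0..1}|lborel. f u * g u)"

text \<open>Correlation basis: complete orthonormal system of L^2([0,1]) with B_0 = 1 (a.e.).
  Completeness = finite linear combinations are dense in L^2([0,1]).\<close>
definition correlation_basis :: "(nat \<Rightarrow> real \<Rightarrow> real) \<Rightarrow> bool" where
  "correlation_basis B \<longleftrightarrow>
     (\<forall>j. L2_01 (B j)) \<and>
     (\<forall>j k. ip01 (B j) (B k) = (if j = k then 1 else 0)) \<and>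
     (AE u in lborel. u \<in> {0..1} \<longrightarrow> B 0 u = 1) \<and>
     (\<forall>f. L2_01 f \<longrightarrow> (\<forall>e>0. \<exists>n c.
         ip01 (\<lambda>u. f u - (\<Sum>j<n. c j * B j u)) (\<lambda>u. f u - (\<Sum>j<n. c j * B j u)) < e))"

definition standardized :: "(real \<Rightarrow> real) \<Rightarrow> bool" where
  "standardized \<psi> \<longleftrightarrow> (LINT u:{0..1}|lborel. \<psi> u) = 0 \<and> (LINT u:{0..1}|lborel. (\<psi> u)\<^sup>2) = 1"

definition alpha :: "(nat \<Rightarrow> real \<Rightarrow> real) \<Rightarrow> nat \<Rightarrow> (real \<Rightarrow> real) \<Rightarrow> real" where
  "alpha B j \<psi> = (LINT u:{0..1}|lborel. \<psi> u * B j u)"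

definition pearson :: "'a measure \<Rightarrow> ('a \<Rightarrow> real) \<Rightarrow> ('a \<Rightarrow> real) \<Rightarrow> real" where
  "pearson M A C =
     ((LINT w|M. A w * C w) - (LINT w|M. A w) * (LINT w|M. C w)) /
     sqrt (((LINT w|M. (A w)\<^sup>2) - (LINT w|M. A w)\<^sup>2) * ((LINT w|M. (C w)\<^sup>2) - (LINT w|M. C w)\<^sup>2))"

definition distfun :: "'a measure \<Rightarrow> ('a \<Rightarrow> real) \<Rightarrow> real \<Rightarrow> real" where
  "distfun M X = cdf (distr M borel X)"

definition rho_gen :: "'a measure \<Rightarrow> (real \<Rightarrow> real) \<Rightarrow> (real \<Rightarrow> real) \<Rightarrow> ('a \<Rightarrow> real) \<Rightarrow> ('a \<Rightarrow> real) \<Rightarrow> real" where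
  "rho_gen M g h X Y = pearson M (\<lambda>w. g (distfun M X (X w))) (\<lambda>w. h (distfun M Y (Y w)))"

definition rhoB :: "(nat \<Rightarrow> real \<Rightarrow> real) \<Rightarrow> nat \<Rightarrow> nat \<Rightarrow> 'a measure \<Rightarrow> ('a \<Rightarrow> real) \<Rightarrow> ('a \<Rightarrow> real) \<Rightarrow> real" where
  "rhoB B j k M X Y = rho_gen M (B j) (B k) X Y"

end

theory Submission
  imports Defs
begin


definition UN01 :: "real measure" where
  "UN01 = density lborel (\<lambda>x. ennreal (indicator {0..1::real} x))"

lemma emeasure_UN01: "A \<in> sets borel \<Longrightarrow> emeasure UN01 A = emeasure lborel (A \<inter> {0..1})"
  unfolding UN01_def
  by (simp add: emeasure_density ennreal_indicator nn_integral_indicator Int_commute flip: indicator_inter_arith)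

lemma sets_UN01[simp]: "sets UN01 = sets borel" by (simp add: UN01_def)
lemma space_UN01[simp]: "space UN01 = UNIV" by (simp add: UN01_def)

lemma real_distribution_UN01: "real_distribution UN01"
proof -
  have "prob_space UN01"
    by (rule prob_spaceI) (simp add: emeasure_UN01)
  then show ?thesis unfolding real_distribution_def real_distribution_axioms_def by simp
qed

lemma cdf_UN01: "cdf UN01 t = (if t < 0 then 0 else if t \<le> 1 then t else 1)"
proof -
  have "emeasure UN01 {..t} = emeasure lborel ({..t} \<inter> {0..1})" by (simp add: emeasure_UN01)
  moreover have "{..t} \<inter> {0..1} = (if t < 0 then {} else if t \<le> 1 then {0..t} else {0..1})"
    by auto
  ultimately have "emeasure UN01 {..t} = ennreal (if t < 0 then 0 else if t \<le> 1 then t else 1)"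
    by auto
  then show ?thesis unfolding cdf_def measure_def by simp
qed

lemma PIT:
  assumes P: "prob_space M" and Xm: "X \<in> borel_measurable M"
    and cont: "continuous_on UNIV (distfun M X)"
  shows "distr M borel (\<lambda>w. distfun M X (X w)) = UN01"
proof -
  interpret prob_space M by (rule P)
  define D where "D = distr M borel X"
  define F where "F = distfun M X"
  have RD: "real_distribution D" unfolding D_def using Xm by simp
  have FD: "F = cdf D" unfolding F_def D_def distfun_def by simp
  have Fm: "F \<in> borel_measurable borel" using cont F_def borel_measurable_continuous_onI by blast
  have Um: "(\<lambda>w. F (X w)) \<in> borel_measurable M" using Fm Xm by measurable
  have RU: "real_distribution (distr M borel (\<lambda>w. F (X w)))" using Um by simp
  have mono: "F x \<le> F y" if "x \<le> y" for x y
    using finite_borel_measure.cdf_nondecreasing[OF real_distribution.finite_borel_measure_M[OF RD] that] FD by simp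
  have F0: "0 \<le> F x" for x using finite_borel_measure.cdf_nonneg[OF real_distribution.finite_borel_measure_M[OF RD]] FD by simp
  have F1: "F x \<le> 1" for x using real_distribution.cdf_bounded_prob[OF RD] FD by simp
  have Fbot: "(F \<longlongrightarrow> 0) at_bot" using finite_borel_measure.cdf_lim_at_bot[OF real_distribution.finite_borel_measure_M[OF RD]] FD by simp
  have Ftop: "(F \<longlongrightarrow> 1) at_top" using real_distribution.cdf_lim_at_top_prob[OF RD] FD by simp
  have key: "measure D {x. F x \<le> t} = (if t < 0 then 0 else if t \<le> 1 then t else 1)" for t
  proof -
    have Dsp: "prob_space D" using RD real_distribution_def by blast
    have Dsets: "sets D = sets borel" unfolding D_def by simp
    consider "t < 0" | "1 \<le> t" | "0 \<le> t" "t < 1" by linarith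
    then show ?thesis
    proof cases
      case 1
      then have "{x. F x \<le> t} = {}" using F0 by (metis (mono_tags) empty_Collect_eq linorder_not_le order_less_le_trans)
      then show ?thesis using 1 by simp
    next
      case 2
      then have "\<And>x. F x \<le> t" using F1 by (meson order_trans)
      then have "{x. F x \<le> t} = space D" by (simp add: D_def)
      then show ?thesis using 2 prob_space.prob_space[OF Dsp] by simp
    next
      case 3
      define S where "S = {x. F x \<le> t}"
      have closedS: "closed S" unfolding S_def
        by (rule closed_Collect_le[OF cont[folded F_def]]) (rule continuous_on_const)
      show ?thesis
      proof (cases "S = {}")
        case True
        have "t = 0"
        proof (rule ccontr)
          assume "t \<noteq> 0"
          with 3 have "t > 0" by simp
          then have "eventually (\<lambda>x. F x < t) at_bot" using order_tendstoD(2)[OF Fbot] by blast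
          then obtain x where "F x < t" by (auto simp: eventually_at_bot_linorder)
          then have "x \<in> S" unfolding S_def by simp
          then show False using True by simp
        qed
        then show ?thesis using True S_def 3 by simp
      next
        case False
        have "eventually (\<lambda>x. t < F x) at_top" using Ftop 3 order_tendstoD(1) by auto
        then obtain b where b: "\<And>x. x \<ge> b \<Longrightarrow> t < F x" by (auto simp: eventually_at_top_linorder)
        have bdd: "bdd_above S"
          unfolding bdd_above_def S_def using b by (metis (mono_tags) mem_Collect_eq not_le less_le_not_le nle_le)
        define a where "a = Sup S"
        have aS: "a \<in> S" unfolding a_def using closed_contains_Sup[OF False bdd closedS] .
        have Seq: "S = {..a}"
        proof
          show "S \<subseteq> {..a}" unfolding a_def using bdd by (auto intro: cSup_upper)
          show "{..a} \<subseteq> S" using aS mono unfolding S_def by (smt (verit) atMost_iff mem_Collect_eq subsetI)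
        qed
        have Fa: "F a = t"
        proof -
          have "F a \<le> t" using aS S_def by simp
          moreover have "a \<le> max a b" by simp
          moreover have "t \<le> F (max a b)" using b[of "max a b"] by simp
          ultimately have "\<exists>c. a \<le> c \<and> c \<le> max a b \<and> F c = t"
            by (intro IVT'[of F a t "max a b"] continuous_on_subset[OF cont[folded F_def]]) auto
          then obtain c where c: "a \<le> c" "c \<le> max a b" "F c = t" by blast
          then have "c \<in> S" using S_def by simp
          then have "c \<le> a" using Seq by auto
          with c show ?thesis by simp
        qed
        have "measure D S = cdf D a" using Seq cdf_def by simp
        then show ?thesis using Fa FD S_def 3 by simp
      qed
    qed
  qed
  have "cdf (distr M borel (\<lambda>w. F (X w))) = cdf UN01"
  proof
    fix t
    have "cdf (distr M borel (\<lambda>w. F (X w))) t = measure M ((\<lambda>w. F (X w)) -` {..t} \<inter> space M)"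
      unfolding cdf_def using Um by (simp add: measure_distr)
    also have "\<dots> = measure M (X -` {x. F x \<le> t} \<inter> space M)" by (simp add: vimage_def)
    also have "\<dots> = measure D {x. F x \<le> t}"
    proof -
      have "{x. F x \<le> t} \<in> sets borel" using Fm by measurable
      then show ?thesis unfolding D_def using Xm by (simp add: measure_distr)
    qed
    also have "\<dots> = cdf UN01 t" using key cdf_UN01 by simp
    finally show "cdf (distr M borel (\<lambda>w. F (X w))) t = cdf UN01 t" .
  qed
  then show ?thesis using cdf_unique[OF RU real_distribution_UN01] F_def by simp
qed


lemma transfer_int:
  assumes D: "distr M borel W = UN01" and Wm: "W \<in> borel_measurable M" and fm: "(f::real\<Rightarrow>real) \<in> borel_measurable borel"
  shows "integrable M (\<lambda>w. f (W w)) \<longleftrightarrow> set_integrable lborel {0..1} f"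
proof -
  have "integrable M (\<lambda>w. f (W w)) \<longleftrightarrow> integrable (distr M borel W) f"
    using integrable_distr_eq[OF Wm fm] by simp
  also have "\<dots> \<longleftrightarrow> integrable lborel (\<lambda>x. indicator {0..1::real} x *\<^sub>R f x)"
    unfolding D UN01_def using fm by (subst integrable_density) auto
  finally show ?thesis unfolding set_integrable_def .
qed

lemma transfer_integral:
  assumes D: "distr M borel W = UN01" and Wm: "W \<in> borel_measurable M" and fm: "(f::real\<Rightarrow>real) \<in> borel_measurable borel"
  shows "(\<integral>w. f (W w) \<partial>M) = (LINT u:{0..1}|lborel. f u)"
proof -
  have "(\<integral>w. f (W w) \<partial>M) = integral\<^sup>L (distr M borel W) f"
    using integral_distr[OF Wm fm] by simp
  also have "\<dots> = (\<integral>x. indicator {0..1::real} x *\<^sub>R f x \<partial>lborel)"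
    unfolding D UN01_def using fm by (subst integral_density) auto
  finally show ?thesis unfolding set_lebesgue_integral_def .
qed



definition sq :: "'a measure \<Rightarrow> ('a \<Rightarrow> real) \<Rightarrow> bool" where
  "sq M f \<longleftrightarrow> f \<in> borel_measurable M \<and> integrable M (\<lambda>x. f x * f x)"

lemma abs_prod_le_sq: "\<bar>a * b\<bar> \<le> a * a + b * (b::real)"
proof -
  have "0 \<le> (\<bar>a\<bar> - \<bar>b\<bar>) * (\<bar>a\<bar> - \<bar>b\<bar>)" by simp
  then have "2 * (\<bar>a\<bar> * \<bar>b\<bar>) \<le> \<bar>a\<bar> * \<bar>a\<bar> + \<bar>b\<bar> * \<bar>b\<bar>" by (simp add: algebra_simps)
  moreover have "\<bar>a\<bar> * \<bar>a\<bar> = a * a" "\<bar>b\<bar> * \<bar>b\<bar> = b * b" by (simp_all add: abs_mult_self_eq)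
  moreover have "0 \<le> \<bar>a\<bar> * \<bar>b\<bar>" by simp
  moreover have "\<bar>a * b\<bar> = \<bar>a\<bar> * \<bar>b\<bar>" by (simp add: abs_mult)
  ultimately show ?thesis by linarith
qed

lemma sq_prod:
  assumes "sq M f" "sq M g" shows "integrable M (\<lambda>x. f x * g x)"
proof (rule Bochner_Integration.integrable_bound[of M "\<lambda>x. f x * f x + g x * g x"])
  have [measurable]: "f \<in> borel_measurable M" "g \<in> borel_measurable M" using assms sq_def by auto
  show "integrable M (\<lambda>x. f x * f x + g x * g x)" using assms unfolding sq_def by (intro Bochner_Integration.integrable_add) auto
  show "(\<lambda>x. f x * g x) \<in> borel_measurable M" by measurable
  show "AE x in M. norm (f x * g x) \<le> norm (f x * f x + g x * g x)"
    using abs_prod_le_sq by (auto intro!: AE_I2 order_trans[OF _ abs_ge_self])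
qed

lemma sq_add: "sq M f \<Longrightarrow> sq M g \<Longrightarrow> sq M (\<lambda>x. f x + g x)"
proof -
  assume a: "sq M f" "sq M g"
  have [measurable]: "f \<in> borel_measurable M" "g \<in> borel_measurable M" using a sq_def by auto
  have "integrable M (\<lambda>x. f x * f x + 2 * (f x * g x) + g x * g x)"
    using a sq_prod[OF a] unfolding sq_def by (intro Bochner_Integration.integrable_add integrable_mult_right) auto
  moreover have "(\<lambda>x. f x + g x) \<in> borel_measurable M" by measurable
  ultimately show ?thesis unfolding sq_def by (simp add: algebra_simps)
qed

lemma sq_cmult: "sq M f \<Longrightarrow> sq M (\<lambda>x. c * f x)"
proof -
  assume a: "sq M f"
  have [measurable]: "f \<in> borel_measurable M" using a sq_def by auto
  have "integrable M (\<lambda>x. (c * c) * (f x * f x))" using a sq_def by auto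
  moreover have "(\<lambda>x. c * f x) \<in> borel_measurable M" by measurable
  ultimately show ?thesis unfolding sq_def by (simp add: algebra_simps)
qed

lemma sq_diff: "sq M f \<Longrightarrow> sq M g \<Longrightarrow> sq M (\<lambda>x. f x - g x)"
  using sq_add[of M f "\<lambda>x. (-1) * g x"] sq_cmult[of M g "-1"] by simp

lemma sq_sum: fixes A :: "nat \<Rightarrow> 'a \<Rightarrow> real" shows "(\<And>j. j < n \<Longrightarrow> sq M (A j)) \<Longrightarrow> sq M (\<lambda>x. \<Sum>j<n. c j * A j x)"
proof (induction n)
  case 0 then show ?case by (simp add: sq_def)
next
  case (Suc n)
  then show ?case using sq_add[OF Suc.IH sq_cmult[of M "A n" "c n"]] by simp
qed

lemma expand:
  fixes A :: "nat \<Rightarrow> 'a \<Rightarrow> real"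
  assumes sqA: "\<And>j. sq M (A j)" and ON: "\<And>j k. (\<integral>x. A j x * A k x \<partial>M) = (if j = k then 1 else 0)"
    and sqG: "sq M G"
  shows "(\<integral>x. (G x - (\<Sum>j<n. c j * A j x)) * (G x - (\<Sum>j<n. c j * A j x)) \<partial>M)
    = (\<integral>x. G x * G x \<partial>M) - 2 * (\<Sum>j<n. c j * (\<integral>x. G x * A j x \<partial>M)) + (\<Sum>j<n. c j * c j)"
proof -
  define S where "S x = (\<Sum>j<n. c j * A j x)" for x
  have sqS: "sq M S" unfolding S_def using sq_sum sqA by blast
  have iGG: "integrable M (\<lambda>x. G x * G x)" using sqG sq_def by auto
  have iGS: "integrable M (\<lambda>x. G x * S x)" using sq_prod[OF sqG sqS] .
  have iSS: "integrable M (\<lambda>x. S x * S x)" using sqS sq_def by auto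
  have GS: "(\<integral>x. G x * S x \<partial>M) = (\<Sum>j<n. c j * (\<integral>x. G x * A j x \<partial>M))"
  proof -
    have "(\<integral>x. G x * S x \<partial>M) = (\<integral>x. (\<Sum>j<n. c j * (G x * A j x)) \<partial>M)"
      unfolding S_def by (simp add: sum_distrib_left algebra_simps)
    also have "\<dots> = (\<Sum>j<n. (\<integral>x. c j * (G x * A j x) \<partial>M))"
      by (rule Bochner_Integration.integral_sum) (use sq_prod[OF sqG sqA] in auto)
    also have "\<dots> = (\<Sum>j<n. c j * (\<integral>x. G x * A j x \<partial>M))" by simp
    finally show ?thesis .
  qed
  have SS: "(\<integral>x. S x * S x \<partial>M) = (\<Sum>j<n. c j * c j)"
  proof -
    have "(\<integral>x. S x * S x \<partial>M) = (\<integral>x. (\<Sum>j<n. \<Sum>k<n. (c j * c k) * (A j x * A k x)) \<partial>M)"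
      unfolding S_def by (simp add: sum_product algebra_simps)
    also have "\<dots> = (\<Sum>j<n. (\<integral>x. (\<Sum>k<n. (c j * c k) * (A j x * A k x)) \<partial>M))"
      by (rule Bochner_Integration.integral_sum) (use sq_prod[OF sqA sqA] in auto)
    also have "\<dots> = (\<Sum>j<n. \<Sum>k<n. (\<integral>x. (c j * c k) * (A j x * A k x) \<partial>M))"
      by (rule sum.cong[OF refl], rule Bochner_Integration.integral_sum) (use sq_prod[OF sqA sqA] in auto)
    also have "\<dots> = (\<Sum>j<n. \<Sum>k<n. (c j * c k) * (if j = k then 1 else 0))"
      by (simp add: ON)
    also have "\<dots> = (\<Sum>j<n. c j * c j)"
      by (intro sum.cong refl) (simp add: if_distrib[of "times _"] cong: if_cong)
    finally show ?thesis .
  qed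
  have "(\<integral>x. (G x - S x) * (G x - S x) \<partial>M) = (\<integral>x. G x * G x - 2 * (G x * S x) + S x * S x \<partial>M)"
    by (simp add: algebra_simps)
  also have "\<dots> = (\<integral>x. G x * G x \<partial>M) - 2 * (\<integral>x. G x * S x \<partial>M) + (\<integral>x. S x * S x \<partial>M)"
    using iGG iGS iSS by simp
  finally show ?thesis using GS SS unfolding S_def by simp
qed


lemma bessel_parseval:
  fixes A :: "nat \<Rightarrow> 'a \<Rightarrow> real"
  assumes sqA: "\<And>j. sq M (A j)" and ON: "\<And>j k. (\<integral>x. A j x * A k x \<partial>M) = (if j = k then 1 else 0)"
    and sqG: "sq M G"
    and comp: "\<And>e. e > 0 \<Longrightarrow> \<exists>n c. (\<integral>x. (G x - (\<Sum>j<n. c j * A j x)) * (G x - (\<Sum>j<n. c j * A j x)) \<partial>M) < e"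
  shows "(\<lambda>j. (\<integral>x. G x * A j x \<partial>M) * (\<integral>x. G x * A j x \<partial>M)) sums (\<integral>x. G x * G x \<partial>M)"
    and "(\<lambda>n. \<integral>x. (G x - (\<Sum>j<n. (\<integral>y. G y * A j y \<partial>M) * A j x)) * (G x - (\<Sum>j<n. (\<integral>y. G y * A j y \<partial>M) * A j x)) \<partial>M) \<longlonglongrightarrow> 0"
proof -
  define a where "a j = (\<integral>x. G x * A j x \<partial>M)" for j
  define E where "E n = (\<integral>x. (G x - (\<Sum>j<n. a j * A j x)) * (G x - (\<Sum>j<n. a j * A j x)) \<partial>M)" for n
  define GG where "GG = (\<integral>x. G x * G x \<partial>M)"
  have Eeq: "E n = GG - (\<Sum>j<n. a j * a j)" for n
    unfolding E_def GG_def using expand[OF sqA ON sqG, where n=n and c=a] a_def by (simp add: sum.distrib)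
  have Enn: "0 \<le> E n" for n unfolding E_def by (rule integral_nonneg_AE) simp
  have Emono: "E m \<le> E n" if "n \<le> m" for m n
  proof -
    have "(\<Sum>j<n. a j * a j) \<le> (\<Sum>j<m. a j * a j)"
      by (rule sum_mono2) (use that in auto)
    then show ?thesis using Eeq by simp
  qed
  have Ec: "E n \<le> (\<integral>x. (G x - (\<Sum>j<n. c j * A j x)) * (G x - (\<Sum>j<n. c j * A j x)) \<partial>M)" for n c
  proof -
    have "0 \<le> (\<Sum>j<n. (c j - a j) * (c j - a j))" by (rule sum_nonneg) simp
    then have "0 \<le> (\<Sum>j<n. c j * c j) - 2 * (\<Sum>j<n. c j * a j) + (\<Sum>j<n. a j * a j)"
      by (simp add: algebra_simps sum.distrib sum_subtractf sum_distrib_left)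
    then show ?thesis using expand[OF sqA ON sqG, where n=n and c=c] Eeq a_def GG_def by simp
  qed
  have lim: "E \<longlonglongrightarrow> 0"
  proof (rule LIMSEQ_I)
    fix r :: real assume "0 < r"
    then obtain n c where nc: "(\<integral>x. (G x - (\<Sum>j<n. c j * A j x)) * (G x - (\<Sum>j<n. c j * A j x)) \<partial>M) < r"
      using comp by blast
    have "norm (E m - 0) < r" if "n \<le> m" for m
      using Emono[OF that] Ec[of n c] nc Enn[of m] by simp
    then show "\<exists>no. \<forall>m\<ge>no. norm (E m - 0) < r" by blast
  qed
  then show "(\<lambda>n. \<integral>x. (G x - (\<Sum>j<n. (\<integral>y. G y * A j y \<partial>M) * A j x)) * (G x - (\<Sum>j<n. (\<integral>y. G y * A j y \<partial>M) * A j x)) \<partial>M) \<longlonglongrightarrow> 0"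
    unfolding E_def a_def .
  have "(\<lambda>n. GG - E n) \<longlonglongrightarrow> GG - 0" by (intro tendsto_diff tendsto_const lim)
  then have "(\<lambda>n. \<Sum>j<n. a j * a j) \<longlonglongrightarrow> GG" using Eeq by simp
  then show "(\<lambda>j. (\<integral>x. G x * A j x \<partial>M) * (\<integral>x. G x * A j x \<partial>M)) sums (\<integral>x. G x * G x \<partial>M)"
    unfolding sums_def a_def GG_def .
qed

lemma lim_cross:
  fixes D :: "nat \<Rightarrow> 'a \<Rightarrow> real"
  assumes sqD: "\<And>n. sq M (D n)" and sqH: "sq M H"
    and lim: "(\<lambda>n. \<integral>x. D n x * D n x \<partial>M) \<longlonglongrightarrow> 0"
  shows "(\<lambda>n. \<integral>x. D n x * H x \<partial>M) \<longlonglongrightarrow> 0"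
proof (rule LIMSEQ_I)
  fix r :: real assume r: "0 < r"
  define hh where "hh = (\<integral>x. H x * H x \<partial>M)"
  have hh0: "0 \<le> hh" unfolding hh_def by (rule integral_nonneg_AE) simp
  define s where "s = (hh + 1) / r"
  have s0: "0 < s" unfolding s_def using hh0 r by simp
  have bound: "\<bar>\<integral>x. D n x * H x \<partial>M\<bar> \<le> (s * (\<integral>x. D n x * D n x \<partial>M) + hh / s) / 2" for n
  proof -
    have pw: "\<bar>d * h\<bar> \<le> (s * (d * d) + (h * h) / s) / 2" for d h :: real
    proof -
      have "0 \<le> (s * \<bar>d\<bar> - \<bar>h\<bar>) * (s * \<bar>d\<bar> - \<bar>h\<bar>)" by simp
      then have "2 * s * (\<bar>d\<bar> * \<bar>h\<bar>) \<le> s * s * (\<bar>d\<bar> * \<bar>d\<bar>) + \<bar>h\<bar> * \<bar>h\<bar>" by (simp add: algebra_simps)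
      moreover have "\<bar>d\<bar> * \<bar>d\<bar> = d * d" "\<bar>h\<bar> * \<bar>h\<bar> = h * h" by (simp_all add: abs_mult_self_eq)
      ultimately have "2 * s * \<bar>d * h\<bar> \<le> s * (s * (d * d)) + h * h" by (simp add: abs_mult algebra_simps)
      then have "s * (2 * \<bar>d * h\<bar>) \<le> s * (s * (d * d) + (h * h) / s)" using s0 by (simp add: algebra_simps)
      then have "2 * \<bar>d * h\<bar> \<le> s * (d * d) + (h * h) / s" using s0 by simp
      then show ?thesis by simp
    qed
    have iDH: "integrable M (\<lambda>x. D n x * H x)" using sq_prod[OF sqD sqH] .
    have iDD: "integrable M (\<lambda>x. D n x * D n x)" using sqD sq_def by auto
    have iHH: "integrable M (\<lambda>x. H x * H x)" using sqH sq_def by auto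
    have "\<bar>\<integral>x. D n x * H x \<partial>M\<bar> \<le> (\<integral>x. \<bar>D n x * H x\<bar> \<partial>M)"
      by (rule integral_abs_bound)
    also have "\<dots> \<le> (\<integral>x. (s * (D n x * D n x) + (H x * H x) / s) / 2 \<partial>M)"
      by (rule integral_mono) (use iDH iDD iHH pw in auto)
    also have "\<dots> = (s * (\<integral>x. D n x * D n x \<partial>M) + hh / s) / 2"
      unfolding hh_def using iDD iHH by simp
    finally show ?thesis .
  qed
  have hs: "hh / s < r"
    unfolding s_def using r hh0 by (simp add: field_simps)
  have "eventually (\<lambda>n. (\<integral>x. D n x * D n x \<partial>M) < r / (2 * s)) sequentially"
    using order_tendstoD(2)[OF lim] r s0 by simp
  then obtain N where N: "\<And>n. n \<ge> N \<Longrightarrow> (\<integral>x. D n x * D n x \<partial>M) < r / (2 * s)"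
    by (auto simp: eventually_sequentially)
  have "norm ((\<integral>x. D n x * H x \<partial>M) - 0) < r" if "n \<ge> N" for n
  proof -
    have "s * (\<integral>x. D n x * D n x \<partial>M) < s * (r / (2 * s))"
      using N[OF that] s0 by (intro mult_strict_left_mono) auto
    also have "\<dots> = r / 2" using s0 by simp
    finally show ?thesis using bound[of n] hs by simp
  qed
  then show "\<exists>no. \<forall>n\<ge>no. norm ((\<integral>x. D n x * H x \<partial>M) - 0) < r" by blast
qed



lemma cross_sums:
  fixes A :: "nat \<Rightarrow> 'a \<Rightarrow> real"
  assumes sqA: "\<And>k. sq M (A k)" and sqG: "sq M G" and sqH: "sq M H"
    and lim: "(\<lambda>n. \<integral>x. (G x - (\<Sum>k<n. a k * A k x)) * (G x - (\<Sum>k<n. a k * A k x)) \<partial>M) \<longlonglongrightarrow> 0"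
  shows "(\<lambda>k. a k * (\<integral>x. A k x * H x \<partial>M)) sums (\<integral>x. G x * H x \<partial>M)"
proof -
  define D where "D n x = G x - (\<Sum>k<n. a k * A k x)" for n x
  have sqD: "sq M (D n)" for n unfolding D_def
    by (rule sq_diff[OF sqG sq_sum]) (rule sqA)
  have L: "(\<lambda>n. \<integral>x. D n x * H x \<partial>M) \<longlonglongrightarrow> 0"
    by (rule lim_cross[OF sqD sqH]) (use lim in \<open>simp add: D_def\<close>)
  have eq: "(\<integral>x. D n x * H x \<partial>M) = (\<integral>x. G x * H x \<partial>M) - (\<Sum>k<n. a k * (\<integral>x. A k x * H x \<partial>M))" for n
  proof -
    have iGH: "integrable M (\<lambda>x. G x * H x)" by (rule sq_prod[OF sqG sqH])
    have iAH: "integrable M (\<lambda>x. A k x * H x)" for k by (rule sq_prod[OF sqA sqH])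
    have "(\<integral>x. D n x * H x \<partial>M) = (\<integral>x. G x * H x - (\<Sum>k<n. a k * (A k x * H x)) \<partial>M)"
      unfolding D_def by (simp add: algebra_simps sum_distrib_left sum_distrib_right)
    also have "\<dots> = (\<integral>x. G x * H x \<partial>M) - (\<integral>x. (\<Sum>k<n. a k * (A k x * H x)) \<partial>M)"
      using iGH iAH by (intro Bochner_Integration.integral_diff) auto
    also have "(\<integral>x. (\<Sum>k<n. a k * (A k x * H x)) \<partial>M) = (\<Sum>k<n. (\<integral>x. a k * (A k x * H x) \<partial>M))"
      by (rule Bochner_Integration.integral_sum) (use iAH in auto)
    finally show ?thesis by simp
  qed
  have "(\<lambda>n. (\<integral>x. G x * H x \<partial>M) - (\<integral>x. D n x * H x \<partial>M)) \<longlonglongrightarrow> (\<integral>x. G x * H x \<partial>M) - 0"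
    by (intro tendsto_diff tendsto_const L)
  then show ?thesis unfolding sums_def using eq by simp
qed

lemma sqW:
  assumes DW: "distr M borel W = UN01" and Wm: "W \<in> borel_measurable M" and f: "L2_01 f"
  shows "sq M (\<lambda>w. f (W w))"
proof -
  have fm[measurable]: "f \<in> borel_measurable borel" using f L2_01_def by auto
  have "set_integrable lborel {0..1} (\<lambda>u. f u * f u)" using f L2_01_def by (simp add: power2_eq_square)
  then have "integrable M (\<lambda>w. f (W w) * f (W w))"
    using transfer_int[OF DW Wm, of "\<lambda>u. f u * f u"] by simp
  moreover have "(\<lambda>w. f (W w)) \<in> borel_measurable M" using Wm by measurable
  ultimately show ?thesis unfolding sq_def by simp
qed

lemma ipW:
  assumes DW: "distr M borel W = UN01" and Wm: "W \<in> borel_measurable M"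
    and fm[measurable]: "f \<in> borel_measurable borel" and gm[measurable]: "g \<in> borel_measurable borel"
  shows "(\<integral>w. f (W w) * g (W w) \<partial>M) = ip01 f g"
  unfolding ip01_def using transfer_integral[OF DW Wm, of "\<lambda>u. f u * g u"] by simp

lemma coreW:
  assumes DW: "distr M borel W = UN01" and Wm: "W \<in> borel_measurable M"
    and CB: "correlation_basis B" and f: "L2_01 f"
  shows "(\<lambda>j. alpha B j f * alpha B j f) sums ip01 f f"
    and "(\<lambda>n. \<integral>x. (f (W x) - (\<Sum>j<n. alpha B j f * B j (W x))) * (f (W x) - (\<Sum>j<n. alpha B j f * B j (W x))) \<partial>M) \<longlonglongrightarrow> 0"
proof -
  have L2B: "L2_01 (B j)" for j using CB correlation_basis_def by auto
  have Bm[measurable]: "B j \<in> borel_measurable borel" for j using L2B L2_01_def by auto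
  have fm[measurable]: "f \<in> borel_measurable borel" using f L2_01_def by auto
  have sqA: "sq M (\<lambda>w. B j (W w))" for j by (rule sqW[OF DW Wm L2B])
  have sqG: "sq M (\<lambda>w. f (W w))" by (rule sqW[OF DW Wm f])
  have ON: "(\<integral>x. B j (W x) * B k (W x) \<partial>M) = (if j = k then 1 else 0)" for j k
    using ipW[OF DW Wm Bm Bm, of j k] CB correlation_basis_def by auto
  have al: "(\<integral>x. f (W x) * B j (W x) \<partial>M) = alpha B j f" for j
    using ipW[OF DW Wm fm Bm, of j] by (simp add: ip01_def alpha_def)
  have ff: "(\<integral>x. f (W x) * f (W x) \<partial>M) = ip01 f f"
    using ipW[OF DW Wm fm fm] .
  have comp: "\<exists>n c. (\<integral>x. (f (W x) - (\<Sum>j<n. c j * B j (W x))) * (f (W x) - (\<Sum>j<n. c j * B j (W x))) \<partial>M) < e"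
    if "e > 0" for e
  proof -
    obtain n c where nc: "ip01 (\<lambda>u. f u - (\<Sum>j<n. c j * B j u)) (\<lambda>u. f u - (\<Sum>j<n. c j * B j u)) < e"
      using CB f \<open>e > 0\<close> unfolding correlation_basis_def by blast
    have mm: "(\<lambda>u. f u - (\<Sum>j<n. c j * B j u)) \<in> borel_measurable borel" by measurable
    have "(\<integral>x. (f (W x) - (\<Sum>j<n. c j * B j (W x))) * (f (W x) - (\<Sum>j<n. c j * B j (W x))) \<partial>M)
        = ip01 (\<lambda>u. f u - (\<Sum>j<n. c j * B j u)) (\<lambda>u. f u - (\<Sum>j<n. c j * B j u))"
      by (rule ipW[OF DW Wm mm mm])
    then show ?thesis using nc by (intro exI[where x=n] exI[where x=c]) simp
  qed
  note BP = bessel_parseval[of M "\<lambda>j w. B j (W w)" "\<lambda>w. f (W w)", OF sqA ON sqG comp]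
  show "(\<lambda>j. alpha B j f * alpha B j f) sums ip01 f f" using BP(1) al ff by simp
  show "(\<lambda>n. \<integral>x. (f (W x) - (\<Sum>j<n. alpha B j f * B j (W x))) * (f (W x) - (\<Sum>j<n. alpha B j f * B j (W x))) \<partial>M) \<longlonglongrightarrow> 0"
    using BP(2) al by simp
qed


lemma alpha0:
  assumes CB: "correlation_basis B" and f: "L2_01 f" and st: "(LINT u:{0..1}|lborel. f u) = 0"
  shows "alpha B 0 f = 0"
proof -
  have fm[measurable]: "f \<in> borel_measurable borel" using f L2_01_def by auto
  have B0m[measurable]: "B 0 \<in> borel_measurable borel" using CB correlation_basis_def L2_01_def by auto
  have ae: "AE u in lborel. u \<in> {0..1} \<longrightarrow> B 0 u = 1" using CB correlation_basis_def by auto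
  have "alpha B 0 f = (LINT u:{0..1}|lborel. f u)"
    unfolding alpha_def by (rule set_lebesgue_integral_cong_AE) (use ae in \<open>auto elim!: AE_mp\<close>)
  then show ?thesis using st by simp
qed

lemma mean0:
  assumes CB: "correlation_basis B" and j: "j \<noteq> 0"
  shows "(LINT u:{0..1}|lborel. B j u) = 0"
proof -
  have Bm[measurable]: "B k \<in> borel_measurable borel" for k using CB correlation_basis_def L2_01_def by auto
  have ae: "AE u in lborel. u \<in> {0..1} \<longrightarrow> B 0 u = 1" using CB correlation_basis_def by auto
  have "(LINT u:{0..1}|lborel. B j u) = ip01 (B j) (B 0)"
    unfolding ip01_def by (rule set_lebesgue_integral_cong_AE) (use ae in \<open>auto elim!: AE_mp\<close>)
  also have "\<dots> = 0" using CB j correlation_basis_def by auto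
  finally show ?thesis .
qed

lemma pearson_std:
  assumes "(LINT w|M. A w) = 0" "(LINT w|M. C w) = 0" "(LINT w|M. (A w)\<^sup>2) = 1" "(LINT w|M. (C w)\<^sup>2) = 1"
  shows "pearson M A C = (LINT w|M. A w * C w)"
  unfolding pearson_def using assms by simp

theorem lemma2:
  fixes M :: "'a measure" and B :: "nat \<Rightarrow> real \<Rightarrow> real" and g h :: "real \<Rightarrow> real"
    and X Y :: "'a \<Rightarrow> real"
  assumes "prob_space M"
    and "correlation_basis B"
    and "L2_01 g" and "L2_01 h"
    and "standardized g" and "standardized h"
    and "X \<in> borel_measurable M" and "Y \<in> borel_measurable M"
    and "continuous_on UNIV (distfun M X)" and "continuous_on UNIV (distfun M Y)"
  shows "(\<forall>j. summable (\<lambda>k. alpha B (Suc j) g * alpha B (Suc k) h * rhoB B (Suc j) (Suc k) M X Y))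
    \<and> (\<lambda>j. \<Sum>k. alpha B (Suc j) g * alpha B (Suc k) h * rhoB B (Suc j) (Suc k) M X Y)
        sums (rho_gen M g h X Y)
    \<and> (\<lambda>j. (alpha B (Suc j) g)\<^sup>2) sums 1
    \<and> (\<lambda>j. (alpha B (Suc j) h)\<^sup>2) sums 1"
proof -
  note P = assms(1) and CB = assms(2) and Lg = assms(3) and Lh = assms(4)
  interpret prob_space M by (rule P)
  define U where "U = (\<lambda>w. distfun M X (X w))"
  define V where "V = (\<lambda>w. distfun M Y (Y w))"
  have DU: "distr M borel U = UN01" unfolding U_def by (rule PIT[OF P assms(7,9)])
  have DV: "distr M borel V = UN01" unfolding V_def by (rule PIT[OF P assms(8,10)])
  have Xm[measurable]: "X \<in> borel_measurable M" and Ym[measurable]: "Y \<in> borel_measurable M" using assms(7,8) .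
  have Fxm[measurable]: "distfun M X \<in> borel_measurable borel" using assms(9) borel_measurable_continuous_onI by blast
  have Fym[measurable]: "distfun M Y \<in> borel_measurable borel" using assms(10) borel_measurable_continuous_onI by blast
  have Um: "U \<in> borel_measurable M" unfolding U_def by measurable
  have Vm: "V \<in> borel_measurable M" unfolding V_def by measurable
  have L2B: "L2_01 (B j)" for j using CB correlation_basis_def by auto
  have Bm[measurable]: "B j \<in> borel_measurable borel" for j using L2B L2_01_def by auto
  have gm[measurable]: "g \<in> borel_measurable borel" using Lg L2_01_def by auto
  have hm[measurable]: "h \<in> borel_measurable borel" using Lh L2_01_def by auto
  have g0: "(LINT u:{0..1}|lborel. g u) = 0" and g1: "(LINT u:{0..1}|lborel. (g u)\<^sup>2) = 1"
    using assms(5) standardized_def by auto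
  have h0: "(LINT u:{0..1}|lborel. h u) = 0" and h1: "(LINT u:{0..1}|lborel. (h u)\<^sup>2) = 1"
    using assms(6) standardized_def by auto
  have ag0: "alpha B 0 g = 0" by (rule alpha0[OF CB Lg g0])
  have ah0: "alpha B 0 h = 0" by (rule alpha0[OF CB Lh h0])
  have ipgg: "ip01 g g = 1" using g1 unfolding ip01_def by (simp add: power2_eq_square)
  have iphh: "ip01 h h = 1" using h1 unfolding ip01_def by (simp add: power2_eq_square)
  define Eb where "Eb f1 f2 = (\<integral>w. f1 (U w) * f2 (V w) \<partial>M)" for f1 f2 :: "real \<Rightarrow> real"
  have TUe: "(\<integral>w. f (U w) \<partial>M) = (LINT u:{0..1}|lborel. f u)" if "f \<in> borel_measurable borel" for f :: "real \<Rightarrow> real"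
    by (rule transfer_integral[OF DU Um that])
  have TVe: "(\<integral>w. f (V w) \<partial>M) = (LINT u:{0..1}|lborel. f u)" if "f \<in> borel_measurable borel" for f :: "real \<Rightarrow> real"
    by (rule transfer_integral[OF DV Vm that])
  have Bsq: "(LINT u:{0..1}|lborel. (B j u)\<^sup>2) = 1" for j
    using CB unfolding correlation_basis_def ip01_def by (simp add: power2_eq_square)
  have rhoBeq: "rhoB B (Suc j) (Suc k) M X Y = Eb (B (Suc j)) (B (Suc k))" for j k
  proof -
    have "rhoB B (Suc j) (Suc k) M X Y = pearson M (\<lambda>w. B (Suc j) (U w)) (\<lambda>w. B (Suc k) (V w))"
      unfolding rhoB_def rho_gen_def U_def V_def ..
    also have "\<dots> = Eb (B (Suc j)) (B (Suc k))" unfolding Eb_def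
      by (rule pearson_std)
         (simp_all add: TUe[of "B (Suc j)"] TVe[of "B (Suc k)"] TUe[of "\<lambda>u. (B (Suc j) u)\<^sup>2"]
           TVe[of "\<lambda>u. (B (Suc k) u)\<^sup>2"] mean0[OF CB] Bsq)
    finally show ?thesis .
  qed
  have rhogeq: "rho_gen M g h X Y = Eb g h"
  proof -
    have "rho_gen M g h X Y = pearson M (\<lambda>w. g (U w)) (\<lambda>w. h (V w))"
      unfolding rho_gen_def U_def V_def ..
    also have "\<dots> = Eb g h" unfolding Eb_def
      by (rule pearson_std)
         (simp_all add: TUe[of g] TVe[of h] TUe[of "\<lambda>u. (g u)\<^sup>2"] TVe[of "\<lambda>u. (h u)\<^sup>2"] g0 h0 g1 h1)
    finally show ?thesis .
  qed
  have sqBU: "sq M (\<lambda>w. B j (U w))" for j by (rule sqW[OF DU Um L2B])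
  have sqBV: "sq M (\<lambda>w. B j (V w))" for j by (rule sqW[OF DV Vm L2B])
  have sqgU: "sq M (\<lambda>w. g (U w))" by (rule sqW[OF DU Um Lg])
  have sqhV: "sq M (\<lambda>w. h (V w))" by (rule sqW[OF DV Vm Lh])
  have inner: "(\<lambda>k. alpha B k h * Eb (B j) (B k)) sums Eb (B j) h" for j
  proof -
    have "(\<lambda>k. alpha B k h * (\<integral>x. B k (V x) * B j (U x) \<partial>M)) sums (\<integral>x. h (V x) * B j (U x) \<partial>M)"
      by (rule cross_sums[OF sqBV sqhV sqBU coreW(2)[OF DV Vm CB Lh]])
    then show ?thesis unfolding Eb_def by (simp add: mult.commute)
  qed
  have outer: "(\<lambda>j. alpha B j g * Eb (B j) h) sums Eb g h"
  proof -
    have "(\<lambda>j. alpha B j g * (\<integral>x. B j (U x) * h (V x) \<partial>M)) sums (\<integral>x. g (U x) * h (V x) \<partial>M)"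
      by (rule cross_sums[OF sqBU sqgU sqhV coreW(2)[OF DU Um CB Lg]])
    then show ?thesis unfolding Eb_def .
  qed
  have inner': "(\<lambda>k. alpha B (Suc j) g * alpha B (Suc k) h * rhoB B (Suc j) (Suc k) M X Y)
      sums (alpha B (Suc j) g * Eb (B (Suc j)) h)" for j
  proof -
    have "(\<lambda>k. alpha B (Suc k) h * Eb (B (Suc j)) (B (Suc k))) sums Eb (B (Suc j)) h"
      using inner[of "Suc j"] ah0 sums_Suc_iff[of "\<lambda>k. alpha B k h * Eb (B (Suc j)) (B k)" "Eb (B (Suc j)) h"] by simp
    from sums_mult[OF this, of "alpha B (Suc j) g"] show ?thesis
      by (simp add: rhoBeq mult.assoc)
  qed
  have part1: "\<forall>j. summable (\<lambda>k. alpha B (Suc j) g * alpha B (Suc k) h * rhoB B (Suc j) (Suc k) M X Y)"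
    using inner' sums_summable by blast
  have part2: "(\<lambda>j. \<Sum>k. alpha B (Suc j) g * alpha B (Suc k) h * rhoB B (Suc j) (Suc k) M X Y)
        sums (rho_gen M g h X Y)"
  proof -
    have "(\<lambda>j. alpha B (Suc j) g * Eb (B (Suc j)) h) sums Eb g h"
      using outer ag0 sums_Suc_iff[of "\<lambda>j. alpha B j g * Eb (B j) h" "Eb g h"] by simp
    then show ?thesis using inner'[THEN sums_unique] rhogeq by simp
  qed
  have part3: "(\<lambda>j. (alpha B (Suc j) g)\<^sup>2) sums 1"
    using coreW(1)[OF DU Um CB Lg] ag0 ipgg sums_Suc_iff[of "\<lambda>j. alpha B j g * alpha B j g" 1] by (simp add: power2_eq_square)
  have part4: "(\<lambda>j. (alpha B (Suc j) h)\<^sup>2) sums 1"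
    using coreW(1)[OF DV Vm CB Lh] ah0 iphh sums_Suc_iff[of "\<lambda>j. alpha B j h * alpha B j h" 1] by (simp add: power2_eq_square)
  show ?thesis using part1 part2 part3 part4 by blast
qed


end
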